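(* Let $X,Y$ be separable Banach spaces, $S:X\to X$ and $T:Y\to Y$ bounded invertible linear operators, and $\Pi:X\to Y$ a bounded linear surjection with $\Pi\circ S=T\circ\Pi$. Then: (1) if $S$ has the shadowing property, then $T$ has the shadowing property. If moreover $\Pi$ admits a strong bounded selector, then: (2) if $S$ is expansive, then $T$ is expansive; (3) if $S$ is uniformly expansive, then $T$ is uniformly expansive.
   Context: $\Pi$ admits a strong bounded selector if there is $L\ge1$ such that for every $y\in Y$ there exists $x\in\Pi^{-1}(y)$ with $\|S^n x\|\le L\|T^n y\|$ and $\|T^n y\|\le L\|S^nx\|$ for all $n\in\mathbb Z$. An invertible operator $T$ is expansive if for each $x$ with $\|x\|=1$ there is $n\in\mathbb Z$ with $\|T^nx\|\ge2$; uniformly expansive if there is $n\in\mathbb N$ such that every $z$ with $\|z\|=1$ satisfies $\|T^nz\|\ge2$ or $\|T^{-n}z\|\ge2$; it has the shadowing property if there is $K>0$ such that for every bounded sequence $(z_n)_{n\in\mathbb Z}$ there is a sequence $(y_n)_{n\in\mathbb Z}$ with $\sup_n\|y_n\|\le K\sup_n\|z_n\|$ and $y_{n+1}=Ty_n+z_n$ for all $n\in\mathbb Z$. *)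

theory Defs
  imports "HOL-Analysis.Analysis"
begin

definition ipow :: "('a \<Rightarrow> 'a) \<Rightarrow> int \<Rightarrow> 'a \<Rightarrow> 'a" where
  "ipow T n = (if n \<ge> 0 then T ^^ nat n else (inv T) ^^ nat (- n))"

definition strong_bounded_selector ::
  "('a::real_normed_vector \<Rightarrow> 'b::real_normed_vector) \<Rightarrow> ('a \<Rightarrow> 'a) \<Rightarrow> ('b \<Rightarrow> 'b) \<Rightarrow> bool" where
  "strong_bounded_selector P S T \<longleftrightarrow>
     (\<exists>L\<ge>1. \<forall>y. \<exists>x. P x = y \<and>
        (\<forall>n::int. norm (ipow S n x) \<le> L * norm (ipow T n y) \<and>
                  norm (ipow T n y) \<le> L * norm (ipow S n x)))"

definition expansive :: "('a::real_normed_vector \<Rightarrow> 'a) \<Rightarrow> bool" where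
  "expansive T \<longleftrightarrow> (\<forall>x. norm x = 1 \<longrightarrow> (\<exists>n::int. norm (ipow T n x) \<ge> 2))"

definition uniformly_expansive :: "('a::real_normed_vector \<Rightarrow> 'a) \<Rightarrow> bool" where
  "uniformly_expansive T \<longleftrightarrow> (\<exists>n::nat. n \<ge> 1 \<and> (\<forall>z. norm z = 1 \<longrightarrow>
      norm (ipow T (int n) z) \<ge> 2 \<or> norm (ipow T (- int n) z) \<ge> 2))"

definition shadowing :: "('a::real_normed_vector \<Rightarrow> 'a) \<Rightarrow> bool" where
  "shadowing T \<longleftrightarrow> (\<exists>K>0. \<forall>z::int \<Rightarrow> 'a. bounded (range z) \<longrightarrow>
      (\<exists>y::int \<Rightarrow> 'a. (\<forall>n. norm (y n) \<le> K * (SUP m. norm (z m))) \<and>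
                      (\<forall>n. y (n + 1) = T (y n) + z n)))"

end

theory Submission
  imports Defs
begin

section \<open>Integer powers\<close>

lemma ipow_0[simp]: "ipow S 0 = id"
  by (simp add: ipow_def)

lemma ipow_succ:
  assumes "bij S"
  shows "ipow S (n + 1) x = S (ipow S n x)"
proof (cases "n \<ge> 0")
  case True
  then have "nat (n + 1) = Suc (nat n)" by simp
  with True show ?thesis by (simp add: ipow_def)
next
  case False
  show ?thesis
  proof (cases "n = -1")
    case True
    then show ?thesis using assms by (simp add: ipow_def bij_is_surj surj_f_inv_f)
  next
    case F2: False
    with False have "nat (- n) = Suc (nat (- (n + 1)))" by simp
    with False F2 show ?thesis using assms
      by (simp add: ipow_def bij_is_surj surj_f_inv_f)
  qed
qed

lemma ipow_pred:
  assumes "bij S"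
  shows "ipow S (n - 1) x = inv S (ipow S n x)"
proof -
  have "ipow S n x = S (ipow S (n - 1) x)"
    using ipow_succ[OF assms, of "n - 1" x] by simp
  then show ?thesis using assms by (simp add: bij_is_inj)
qed

lemma ipow_add:
  assumes "bij S"
  shows "ipow S (a + b) x = ipow S a (ipow S b x)"
proof (induction a rule: int_induct[where k = 0])
  case base
  then show ?case by simp
next
  case (step1 i)
  have "ipow S (i + 1 + b) x = ipow S ((i + b) + 1) x" by (simp add: algebra_simps)
  also have "\<dots> = S (ipow S (i + b) x)" by (rule ipow_succ[OF assms])
  also have "\<dots> = ipow S (i + 1) (ipow S b x)" using step1 ipow_succ[OF assms] by simp
  finally show ?case .
next
  case (step2 i)
  have "ipow S (i - 1 + b) x = ipow S ((i + b) - 1) x" by (simp add: algebra_simps)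
  also have "\<dots> = inv S (ipow S (i + b) x)" by (rule ipow_pred[OF assms])
  also have "\<dots> = ipow S (i - 1) (ipow S b x)" using step2 ipow_pred[OF assms] by simp
  finally show ?case .
qed

lemma inv_scale:
  assumes "bij S" "linear S"
  shows "inv S (c *\<^sub>R x) = c *\<^sub>R inv S x"
proof -
  have "S (c *\<^sub>R inv S x) = c *\<^sub>R x"
    using assms by (simp add: linear_scale bij_is_surj surj_f_inv_f)
  then show ?thesis using assms by (metis bij_is_inj inv_f_f)
qed

lemma funpow_scale:
  fixes f :: "'a::real_vector \<Rightarrow> 'a"
  assumes "\<And>c x. f (c *\<^sub>R x) = c *\<^sub>R f x"
  shows "(f ^^ n) (c *\<^sub>R x) = c *\<^sub>R (f ^^ n) x"
  by (induction n) (simp_all add: assms)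

lemma ipow_scale:
  assumes "bij S" "linear S"
  shows "ipow S n (c *\<^sub>R x) = c *\<^sub>R ipow S n x"
  unfolding ipow_def
  using funpow_scale[of S] funpow_scale[of "inv S"] inv_scale[OF assms] linear_scale[OF assms(2)]
  by auto

lemma ipow_zero:
  assumes "bij S" "linear S"
  shows "ipow S n 0 = 0"
  using ipow_scale[OF assms, of n 0 0] by simp

section \<open>Open mapping (lifting form)\<close>

lemma baire_ball:
  fixes P :: "'a::banach \<Rightarrow> 'b::banach"
  assumes "surj P"
  shows "\<exists>k::nat. \<exists>y0 r. r > 0 \<and> ball y0 r \<subseteq> closure (P ` ball 0 (real k))"
proof (rule ccontr)
  assume H: "\<not> ?thesis"
  have "euclidean interior_of \<Union>(range (\<lambda>k::nat. closure (P ` ball 0 (real k)))) = {}"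
  proof (rule Baire_category_alt)
    show "completely_metrizable_space (euclidean :: 'b topology) \<or>
      locally_compact_space (euclidean :: 'b topology) \<and> regular_space (euclidean :: 'b topology)"
      using completely_metrizable_space_euclidean by blast
    show "countable (range (\<lambda>k::nat. closure (P ` ball 0 (real k))))" by simp
    fix U assume "U \<in> range (\<lambda>k::nat. closure (P ` ball 0 (real k)))"
    then obtain k where U: "U = closure (P ` ball 0 (real k))" by auto
    show "closedin euclidean U \<and> euclidean interior_of U = {}"
    proof
      show "closedin euclidean U" using U by simp
      show "euclidean interior_of U = {}"
      proof (rule ccontr)
        assume "euclidean interior_of U \<noteq> {}"
        then obtain y0 where "y0 \<in> interior U" by (auto simp: interior_of_openin interior_def interior_of_def)
        then obtain r where "r > 0" "ball y0 r \<subseteq> U"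
          by (auto simp: mem_interior)
        then have "r > 0 \<and> ball y0 r \<subseteq> closure (P ` ball 0 (real k))" using U by simp
        then have "\<exists>k::nat. \<exists>y0 r. r > 0 \<and> ball y0 r \<subseteq> closure (P ` ball 0 (real k))" by blast
        with H show False by simp
      qed
    qed
  qed
  moreover have "\<Union>(range (\<lambda>k::nat. closure (P ` ball 0 (real k)))) = UNIV"
  proof -
    have "y \<in> \<Union>(range (\<lambda>k::nat. closure (P ` ball 0 (real k))))" for y
    proof -
      obtain x where x: "y = P x" using assms by (metis surjD)
      obtain k::nat where "norm x < real k" using reals_Archimedean2 by blast
      then have "y \<in> closure (P ` ball 0 (real k))" using x closure_subset by fastforce
      then show ?thesis by blast
    qed
    then show ?thesis by blast
  qed
  ultimately show False by simp
qed

lemma approx_lift: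
  fixes P :: "'a::banach \<Rightarrow> 'b::banach"
  assumes "bounded_linear P" "surj P"
  shows "\<exists>M\<ge>0. \<forall>y. \<exists>x. norm x \<le> M * norm y \<and> norm (y - P x) \<le> norm y / 2"
proof -
  interpret P: bounded_linear P by fact
  obtain k::nat and y0 r where r: "r > 0" and B: "ball y0 r \<subseteq> closure (P ` ball 0 (real k))"
    using baire_ball[OF assms(2)] by blast
  have apx: "\<exists>x. norm x < 2 * real k \<and> norm (v - P x) < e" if v: "norm v < r" and e: "e > 0" for v e
  proof -
    have "y0 + v \<in> closure (P ` ball 0 (real k))" using B v by (auto simp: dist_norm)
    then obtain a where a: "a \<in> ball 0 (real k)" "dist (P a) (y0 + v) < e/2"
      using e unfolding closure_approachable by (auto dest!: spec[of _ "e/2"])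
    have "y0 \<in> closure (P ` ball 0 (real k))" using B r by auto
    then obtain b where b: "b \<in> ball 0 (real k)" "dist (P b) y0 < e/2"
      using e unfolding closure_approachable by (auto dest!: spec[of _ "e/2"])
    have "norm (a - b) \<le> norm a + norm b" by (rule norm_triangle_ineq4)
    also have "\<dots> < 2 * real k" using a b by simp
    finally have 1: "norm (a - b) < 2 * real k" .
    have "v - P (a - b) = (y0 + v - P a) - (y0 - P b)" by (simp add: P.diff algebra_simps)
    then have "norm (v - P (a - b)) \<le> norm (y0 + v - P a) + norm (y0 - P b)"
      by (metis norm_triangle_ineq4)
    also have "\<dots> < e" using a(2) b(2) by (simp add: dist_norm norm_minus_commute)
    finally show ?thesis using 1 by blast
  qed
  define M where "M = 4 * real k / r"
  have "M \<ge> 0" using r by (simp add: M_def)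
  moreover have "\<exists>x. norm x \<le> M * norm y \<and> norm (y - P x) \<le> norm y / 2" for y
  proof (cases "y = 0")
    case True
    then show ?thesis by (intro exI[of _ 0]) simp
  next
    case False
    define c where "c = r / (2 * norm y)"
    have c: "c > 0" using False r by (simp add: c_def)
    have "norm (c *\<^sub>R y) = r / 2" using False r by (simp add: c_def)
    then have "norm (c *\<^sub>R y) < r" using r by simp
    then obtain x' where x': "norm x' < 2 * real k" "norm (c *\<^sub>R y - P x') < r / 4"
      using apx[of "c *\<^sub>R y" "r/4"] r by auto
    define x where "x = (1/c) *\<^sub>R x'"
    have "norm x = norm x' / c" using c by (simp add: x_def)
    also have "\<dots> \<le> 2 * real k / c" using x' c by (simp add: divide_right_mono)
    also have "\<dots> = M * norm y" using False r by (simp add: c_def M_def field_simps)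
    finally have 1: "norm x \<le> M * norm y" .
    have "y - P x = (1/c) *\<^sub>R (c *\<^sub>R y - P x')" using c by (simp add: x_def P.scaleR algebra_simps)
    then have "norm (y - P x) = norm (c *\<^sub>R y - P x') / c" using c by simp
    also have "\<dots> \<le> (r / 4) / c" using x'(2) c by (intro divide_right_mono) auto
    also have "\<dots> = norm y / 2" using False r by (simp add: c_def field_simps)
    finally show ?thesis using 1 by blast
  qed
  ultimately show ?thesis by blast
qed

lemma open_lift:
  fixes P :: "'a::banach \<Rightarrow> 'b::banach"
  assumes "bounded_linear P" "surj P"
  shows "\<exists>C>0. \<forall>y. \<exists>x. P x = y \<and> norm x \<le> C * norm y"
proof -
  interpret P: bounded_linear P by fact
  obtain M where M: "M \<ge> 0" and Mex: "\<forall>y. \<exists>x. norm x \<le> M * norm y \<and> norm (y - P x) \<le> norm y / 2"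
    using approx_lift[OF assms] by blast
  from Mex have "\<exists>f. \<forall>y. norm (f y) \<le> M * norm y \<and> norm (y - P (f y)) \<le> norm y / 2"
    by (rule choice)
  then obtain f where f: "\<And>y. norm (f y) \<le> M * norm y" "\<And>y. norm (y - P (f y)) \<le> norm y / 2"
    by blast
  have "\<exists>x. P x = y \<and> norm x \<le> (2 * M + 1) * norm y" for y
  proof -
    define g where "g = (\<lambda>v. v - P (f v))"
    define r where "r n = (g ^^ n) y" for n
    define xs where "xs n = f (r n)" for n
    have rS: "r (Suc n) = r n - P (xs n)" for n by (simp add: r_def xs_def g_def)
    have rn: "norm (r n) \<le> norm y / 2 ^ n" for n
    proof (induction n)
      case 0 then show ?case by (simp add: r_def)
    next
      case (Suc n)
      have "norm (r (Suc n)) \<le> norm (r n) / 2" using f(2) by (simp add: rS xs_def)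
      also have "\<dots> \<le> (norm y / 2 ^ n) / 2" using Suc.IH by (intro divide_right_mono) auto
      finally show ?case by simp
    qed
    have xn: "norm (xs n) \<le> M * norm y * (1/2) ^ n" for n
    proof -
      have "norm (xs n) \<le> M * norm (r n)" using f(1) by (simp add: xs_def)
      also have "\<dots> \<le> M * (norm y / 2 ^ n)" using rn[of n] M by (rule mult_left_mono)
      finally show ?thesis by (simp add: power_one_over)
    qed
    have sg: "summable (\<lambda>n. M * norm y * (1/2::real) ^ n)"
      by (intro summable_mult summable_geometric) simp
    have sn: "summable (\<lambda>n. norm (xs n))"
      by (rule summable_comparison_test'[OF sg]) (use xn in auto)
    then have sx: "summable xs" by (rule summable_norm_cancel)
    have psum: "(\<Sum>i<n. P (xs i)) = y - r n" for n
      by (induction n) (simp_all add: r_def[of 0] rS)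
    have r0: "r \<longlonglongrightarrow> 0"
    proof (rule tendsto_norm_zero_cancel, rule Lim_null_comparison)
      show "\<forall>\<^sub>F n in sequentially. norm (norm (r n)) \<le> norm y * (1/2) ^ n"
        using rn by (simp add: power_one_over)
      show "(\<lambda>n. norm y * (1/2::real) ^ n) \<longlonglongrightarrow> 0"
        by (intro tendsto_mult_right_zero LIMSEQ_power_zero) simp
    qed
    have "(\<lambda>n. P (xs n)) sums y"
      unfolding sums_def psum using tendsto_diff[OF tendsto_const[of y] r0] by simp
    moreover have "(\<lambda>n. P (xs n)) sums P (suminf xs)"
      using P.sums[OF summable_sums[OF sx]] .
    ultimately have Py: "P (suminf xs) = y" using sums_unique2 by blast
    have "norm (suminf xs) \<le> (\<Sum>n. norm (xs n))" by (rule summable_norm[OF sn])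
    also have "\<dots> \<le> (\<Sum>n. M * norm y * (1/2::real) ^ n)"
      by (rule suminf_le[OF xn sn sg])
    also have "\<dots> = M * norm y * (\<Sum>n. (1/2::real) ^ n)"
      by (rule suminf_mult) (simp add: summable_geometric)
    also have "(\<Sum>n. (1/2::real) ^ n) = 2"
      using suminf_geometric[of "1/2::real"] by simp
    also have "M * norm y * 2 = (2 * M) * norm y" by simp
    also have "\<dots> \<le> (2 * M + 1) * norm y" by (simp add: algebra_simps)
    finally show ?thesis using Py by blast
  qed
  moreover have "2 * M + 1 > 0" using M by simp
  ultimately show ?thesis by blast
qed

lemma ipow_nat: "ipow S (int m) = S ^^ m"
  by (simp add: ipow_def)

lemma ipow_neg_nat: "ipow S (- int m) = inv S ^^ m"
  by (cases "m = 0") (simp_all add: ipow_def)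

lemma expansive_iter:
  fixes S :: "'a::real_normed_vector \<Rightarrow> 'a"
  assumes "bij S" "linear S" "expansive S"
  shows "\<exists>n. norm (ipow S n x) \<ge> 2 ^ k * norm x"
proof (induction k)
  case 0
  show ?case by (intro exI[of _ 0]) simp
next
  case (Suc k)
  then obtain n where n: "norm (ipow S n x) \<ge> 2 ^ k * norm x" by blast
  show ?case
  proof (cases "ipow S n x = 0")
    case True
    then have "2 ^ k * norm x \<le> 0" using n by simp
    moreover have "(2::real) ^ k > 0" by simp
    ultimately have "norm x \<le> 0" by (simp add: mult_le_0_iff)
    then have "x = 0" by simp
    then show ?thesis by (intro exI[of _ 0]) simp
  next
    case False
    define v where "v = ipow S n x"
    have nv: "norm v > 0" using False by (simp add: v_def)
    define u where "u = (1 / norm v) *\<^sub>R v"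
    have "norm u = 1" using nv by (simp add: u_def)
    then obtain m where m: "norm (ipow S m u) \<ge> 2"
      using assms(3) unfolding expansive_def by blast
    have "ipow S m u = (1 / norm v) *\<^sub>R ipow S m v"
      unfolding u_def by (rule ipow_scale[OF assms(1,2)])
    then have "norm (ipow S m u) = norm (ipow S m v) / norm v" by simp
    with m nv have "norm (ipow S m v) \<ge> 2 * norm v" by (simp add: le_divide_eq)
    moreover have "ipow S m v = ipow S (m + n) x"
      unfolding v_def by (rule ipow_add[OF assms(1), symmetric])
    ultimately have "norm (ipow S (m + n) x) \<ge> 2 * (2 ^ k * norm x)"
      using n by (simp add: v_def)
    then show ?thesis by (auto simp: mult.assoc)
  qed
qed

lemma ue_step:
  fixes A B :: "'a::real_normed_vector \<Rightarrow> 'a"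
  assumes A0: "A 0 = 0" and BA: "\<And>w. B (A w) = w"
    and D: "\<And>w. norm (A w) \<ge> 2 * norm w \<or> norm (B w) \<ge> 2 * norm w"
    and z: "norm (A z) \<ge> 2 * norm z"
  shows "norm (A (A z)) \<ge> 2 * norm (A z)"
proof -
  from D[of "A z"] show ?thesis
  proof
    assume "norm (B (A z)) \<ge> 2 * norm (A z)"
    then have "norm z \<ge> 2 * norm (A z)" by (simp add: BA)
    with z have "norm z \<le> 0" using norm_ge_zero[of "A z"] by linarith
    then have "z = 0" by simp
    then show ?thesis by (simp add: A0)
  qed
qed

lemma ue_iter:
  fixes A B :: "'a::real_normed_vector \<Rightarrow> 'a"
  assumes A0: "A 0 = 0" and BA: "\<And>w. B (A w) = w"
    and D: "\<And>w. norm (A w) \<ge> 2 * norm w \<or> norm (B w) \<ge> 2 * norm w"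
  shows "norm (A z) \<ge> 2 * norm z \<Longrightarrow> norm ((A ^^ j) z) \<ge> 2 ^ j * norm z"
proof (induction j arbitrary: z)
  case 0
  then show ?case by simp
next
  case (Suc j)
  have "norm (A (A z)) \<ge> 2 * norm (A z)" by (rule ue_step[OF A0 BA D Suc.prems])
  then have "norm ((A ^^ j) (A z)) \<ge> 2 ^ j * norm (A z)" by (rule Suc.IH)
  moreover have "2 ^ j * norm (A z) \<ge> 2 ^ j * (2 * norm z)"
    using Suc.prems by (intro mult_left_mono) auto
  moreover have "(A ^^ Suc j) z = (A ^^ j) (A z)" by (simp add: funpow_Suc_right del: funpow.simps)
  ultimately have "norm ((A ^^ Suc j) z) \<ge> 2 ^ j * (2 * norm z)" by (metis order_trans)
  then show ?case by (simp add: mult_ac)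
qed

lemma shadow_part:
  fixes S :: "'a::banach \<Rightarrow> 'a" and T :: "'b::banach \<Rightarrow> 'b" and P :: "'a \<Rightarrow> 'b"
  assumes lP: "bounded_linear P" and sP: "surj P" and comm: "P \<circ> S = T \<circ> P"
    and sh: "shadowing S"
  shows "shadowing T"
proof -
  interpret P: bounded_linear P by fact
  obtain K where K: "K > 0" and Ksh: "\<forall>z::int \<Rightarrow> 'a. bounded (range z) \<longrightarrow>
      (\<exists>y::int \<Rightarrow> 'a. (\<forall>n. norm (y n) \<le> K * (SUP m. norm (z m))) \<and>
                      (\<forall>n. y (n + 1) = S (y n) + z n))"
    using sh unfolding shadowing_def by blast
  obtain C where C: "C > 0" and lift: "\<forall>y. \<exists>x. P x = y \<and> norm x \<le> C * norm y"
    using open_lift[OF lP sP] by blast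
  obtain Kp where Kp: "Kp > 0" and Pb: "\<And>x. norm (P x) \<le> norm x * Kp"
    using P.pos_bounded by blast
  have PS: "P (S x) = T (P x)" for x using comm by (metis comp_apply)
  show ?thesis
    unfolding shadowing_def
  proof (intro exI[of _ "Kp * K * C"] conjI allI impI)
    show "Kp * K * C > 0" using Kp K C by simp
    fix z :: "int \<Rightarrow> 'b"
    assume bz: "bounded (range z)"
    then obtain B where B: "\<And>n. norm (z n) \<le> B" by (auto simp: bounded_iff)
    have bdd: "bdd_above (range (\<lambda>m. norm (z m)))" using B by (intro bdd_aboveI2) auto
    define SZ where "SZ = (SUP m. norm (z m))"
    have zle: "norm (z n) \<le> SZ" for n unfolding SZ_def using bdd by (rule cSUP_upper[OF UNIV_I])
    from lift have "\<forall>n. \<exists>x. P x = z n \<and> norm x \<le> C * norm (z n)" by blast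
    then have "\<exists>w. \<forall>n. P (w n) = z n \<and> norm (w n) \<le> C * norm (z n)" by (rule choice)
    then obtain w where w: "\<And>n. P (w n) = z n" "\<And>n. norm (w n) \<le> C * norm (z n)" by blast
    have wle: "norm (w n) \<le> C * SZ" for n
      using w(2)[of n] mult_left_mono[OF zle[of n], of C] C by linarith
    have bw: "bounded (range w)" unfolding bounded_iff using wle by blast
    have SW: "(SUP m. norm (w m)) \<le> C * SZ" by (rule cSUP_least) (auto simp: wle)
    obtain u where u: "\<And>n. norm (u n) \<le> K * (SUP m. norm (w m))"
      "\<And>n. u (n + 1) = S (u n) + w n"
      using Ksh bw by blast
    show "\<exists>y. (\<forall>n. norm (y n) \<le> Kp * K * C * (SUP m. norm (z m))) \<and> (\<forall>n. y (n + 1) = T (y n) + z n)"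
    proof (intro exI[of _ "\<lambda>n. P (u n)"] conjI allI)
      fix n
      have "norm (P (u n)) \<le> norm (u n) * Kp" by (rule Pb)
      also have "\<dots> \<le> (K * (C * SZ)) * Kp"
      proof (rule mult_right_mono)
        show "norm (u n) \<le> K * (C * SZ)"
          using u(1)[of n] mult_left_mono[OF SW, of K] K by linarith
      qed (use Kp in simp)
      also have "\<dots> = Kp * K * C * (SUP m. norm (z m))" by (simp add: SZ_def mult_ac)
      finally show "norm (P (u n)) \<le> Kp * K * C * (SUP m. norm (z m))" .
      show "P (u (n + 1)) = T (P (u n)) + z n"
        by (simp add: u(2) P.add PS w(1))
    qed
  qed
qed

lemma arith_help:
  fixes L a c s t :: real
  assumes L: "L \<ge> 1" and La: "1 \<le> L * a" and a: "a \<ge> 0" and c: "2 * L^2 < c"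
    and cs: "c * a \<le> s" and st: "s \<le> L * t"
  shows "2 \<le> t"
proof -
  have "2 * L^2 * a \<le> c * a" using c a by (intro mult_right_mono) auto
  also have "\<dots> \<le> L * t" using cs st by linarith
  finally have 1: "2 * L^2 * a \<le> L * t" .
  have "2 * L \<le> 2 * L * (L * a)" using La L by simp
  also have "\<dots> = 2 * L^2 * a" by (simp add: power2_eq_square)
  finally have "L * 2 \<le> L * t" using 1 by simp
  then show ?thesis using L by simp
qed

lemma expansive_part:
  fixes S :: "'a::banach \<Rightarrow> 'a" and T :: "'b::banach \<Rightarrow> 'b" and P :: "'a \<Rightarrow> 'b"
  assumes "bij S" "linear S" and sel: "strong_bounded_selector P S T" and ex: "expansive S"
  shows "expansive T"
proof -
  obtain L where L: "L \<ge> 1" and selx: "\<forall>y. \<exists>x. P x = y \<and>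
        (\<forall>n::int. norm (ipow S n x) \<le> L * norm (ipow T n y) \<and>
                  norm (ipow T n y) \<le> L * norm (ipow S n x))"
    using sel unfolding strong_bounded_selector_def by blast
  obtain k where k: "2 * L^2 < 2 ^ k" using real_arch_pow[of 2 "2 * L^2"] by auto
  show ?thesis
    unfolding expansive_def
  proof (intro allI impI)
    fix y :: 'b assume y: "norm y = 1"
    obtain x where x: "\<And>n::int. norm (ipow S n x) \<le> L * norm (ipow T n y)"
      "\<And>n::int. norm (ipow T n y) \<le> L * norm (ipow S n x)"
      using selx by blast
    have La: "1 \<le> L * norm x" using x(2)[of 0] y by simp
    obtain n where n: "norm (ipow S n x) \<ge> 2 ^ k * norm x"
      using expansive_iter[OF assms(1,2) ex] by blast
    have "2 \<le> norm (ipow T n y)"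
      by (rule arith_help[OF L La norm_ge_zero k n x(1)])
    then show "\<exists>n. 2 \<le> norm (ipow T n y)" by blast
  qed
qed

lemma ue_part:
  fixes S :: "'a::banach \<Rightarrow> 'a" and T :: "'b::banach \<Rightarrow> 'b" and P :: "'a \<Rightarrow> 'b"
  assumes bS: "bij S" and lS: "linear S" and sel: "strong_bounded_selector P S T"
    and ue: "uniformly_expansive S"
  shows "uniformly_expansive T"
proof -
  obtain L where L: "L \<ge> 1" and selx: "\<forall>y. \<exists>x. P x = y \<and>
        (\<forall>n::int. norm (ipow S n x) \<le> L * norm (ipow T n y) \<and>
                  norm (ipow T n y) \<le> L * norm (ipow S n x))"
    using sel unfolding strong_bounded_selector_def by blast
  obtain n :: nat where n1: "n \<ge> 1" and D0: "\<And>z. norm z = 1 \<Longrightarrow>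
      norm (ipow S (int n) z) \<ge> 2 \<or> norm (ipow S (- int n) z) \<ge> 2"
    using ue unfolding uniformly_expansive_def by blast
  define A where "A = ipow S (int n)"
  define B where "B = ipow S (- int n)"
  have A0: "A 0 = 0" and B0: "B 0 = 0" unfolding A_def B_def by (simp_all add: ipow_zero[OF bS lS])
  have BA: "B (A w) = w" for w
    unfolding A_def B_def using ipow_add[OF bS, of "- int n" "int n" w] by simp
  have AB: "A (B w) = w" for w
    unfolding A_def B_def using ipow_add[OF bS, of "int n" "- int n" w] by simp
  have D: "norm (A w) \<ge> 2 * norm w \<or> norm (B w) \<ge> 2 * norm w" for w
  proof (cases "w = 0")
    case True then show ?thesis by (simp add: A0)
  next
    case False
    then have nw: "norm w > 0" by simp
    define u where "u = (1 / norm w) *\<^sub>R w"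
    have "norm u = 1" using nw by (simp add: u_def)
    then have "norm (A u) \<ge> 2 \<or> norm (B u) \<ge> 2" unfolding A_def B_def by (rule D0)
    moreover have "A u = (1 / norm w) *\<^sub>R A w" "B u = (1 / norm w) *\<^sub>R B w"
      unfolding u_def A_def B_def by (simp_all add: ipow_scale[OF bS lS])
    ultimately show ?thesis using nw by (auto simp: le_divide_eq)
  qed
  have D': "norm (B w) \<ge> 2 * norm w \<or> norm (A w) \<ge> 2 * norm w" for w using D by blast
  obtain j0 where j0: "2 * L^2 < 2 ^ j0" using real_arch_pow[of 2 "2 * L^2"] by auto
  define j where "j = Suc j0"
  have "(2::real) ^ j0 \<le> 2 ^ j" unfolding j_def by (rule power_increasing) auto
  with j0 have k: "2 * L^2 < 2 ^ j" by linarith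
  have Aj: "(A ^^ j) = ipow S (int (n * j))" unfolding A_def ipow_nat by (simp add: funpow_mult)
  have Bj: "(B ^^ j) = ipow S (- int (n * j))" unfolding B_def ipow_neg_nat by (simp add: funpow_mult)
  show ?thesis
    unfolding uniformly_expansive_def
  proof (intro exI[of _ "n * j"] conjI allI impI)
    show "n * j \<ge> 1" using n1 by (simp add: j_def)
    fix y :: 'b assume y: "norm y = 1"
    obtain x where x: "\<And>n::int. norm (ipow S n x) \<le> L * norm (ipow T n y)"
      "\<And>n::int. norm (ipow T n y) \<le> L * norm (ipow S n x)"
      using selx by blast
    have La: "1 \<le> L * norm x" using x(2)[of 0] y by simp
    from D[of x] show "2 \<le> norm (ipow T (int (n * j)) y) \<or> 2 \<le> norm (ipow T (- int (n * j)) y)"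
    proof
      assume "norm (A x) \<ge> 2 * norm x"
      then have "norm ((A ^^ j) x) \<ge> 2 ^ j * norm x" by (rule ue_iter[OF A0 BA D])
      then have "norm (ipow S (int (n * j)) x) \<ge> 2 ^ j * norm x" by (simp add: Aj)
      then have "2 \<le> norm (ipow T (int (n * j)) y)"
        by (rule arith_help[OF L La norm_ge_zero k _ x(1)])
      then show ?thesis by blast
    next
      assume "norm (B x) \<ge> 2 * norm x"
      then have "norm ((B ^^ j) x) \<ge> 2 ^ j * norm x" by (rule ue_iter[OF B0 AB D'])
      then have "norm (ipow S (- int (n * j)) x) \<ge> 2 ^ j * norm x" by (simp add: Bj)
      then have "2 \<le> norm (ipow T (- int (n * j)) y)"
        by (rule arith_help[OF L La norm_ge_zero k _ x(1)])
      then show ?thesis by blast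
    qed
  qed
qed

theorem lemma3p2:
  fixes S :: "'a::banach \<Rightarrow> 'a" and T :: "'b::banach \<Rightarrow> 'b" and P :: "'a \<Rightarrow> 'b"
  assumes "separable_space (euclidean :: 'a topology)"
    and "separable_space (euclidean :: 'b topology)"
    and "bounded_linear S" and "bij S"
    and "bounded_linear T" and "bij T"
    and "bounded_linear P" and "surj P"
    and "P \<circ> S = T \<circ> P"
  shows "(shadowing S \<longrightarrow> shadowing T) \<and>
         (strong_bounded_selector P S T \<longrightarrow>
            (expansive S \<longrightarrow> expansive T) \<and>
            (uniformly_expansive S \<longrightarrow> uniformly_expansive T))"
proof -
  have lS: "linear S" using assms(3) by (rule bounded_linear.linear)
  show ?thesis
  proof (intro conjI impI)
    show "shadowing T" if "shadowing S" using shadow_part[OF assms(7,8,9) that] .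
    show "expansive T" if "strong_bounded_selector P S T" "expansive S"
      using expansive_part[OF assms(4) lS that] .
    show "uniformly_expansive T" if "strong_bounded_selector P S T" "uniformly_expansive S"
      using ue_part[OF assms(4) lS that] .
  qed
qed

end
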